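(* Let $T$ be an Aronszajn tree and let $G$ be a sparse $T$-graph with the following property: for every $t \in T$ there is a finite set $S_t \subseteq \{s \in T : s < t\}$ such that every $t' > t$ has all its down-neighbours (in $G$) that lie below $t$ inside $S_t$. Then the ray inflation $G \sharp \mathbb{N}$ witnesses that $\mathrm{HC}(\aleph_1)$ fails: it has an end $\varepsilon$ of degree $\aleph_1$ such that no set of $\aleph_1$ pairwise disjoint rays in $\varepsilon$ admits a connected ray graph in $G\sharp\mathbb{N}$.
   Context: An order tree is a partial order $(T,\le)$ with a unique minimal element (the root) in which every set $\lceil t\rceil=\{t' : t' \le t\}$ is well-ordered. The height of $t$ is the order type of $\{t' : t'<t\}$; the $i$-th level $T^i$ is the set of points of height $i$; a branch is a maximal chain. $t$ is a successor of $t'$ (and $t'$ its predecessor) if $t'<t$ with nothing strictly between; a point with no predecessor is a limit. An Aronszajn tree is an order tree of cardinality $\aleph_1$ all of whose branches and levels are countable. A $T$-graph is a graph $G$ with $V(G)=T$ such that the endvertices of every edge are comparable in $T$ and, for every $t$, the set of neighbours of $t$ below $t$ (its down-neighbours) is cofinal in $\{s : s<t\}$. $G$ is sparse if for every $t$ the set of down-neighbours of $t$ has order type $\mathrm{cf}(\{s : s<t\})$; for trees of height at most $\omega_1$ this means a successor's unique down-neighbour is its predecessor and the down-neighbours of a non-root limit form a cofinal $\omega$-sequence below it. For such $G$ (with $T$ of height at most $\omega_1$), the ray inflation $G\sharp\mathbb{N}$ has vertex set $T\times\mathbb{N}$ and edges: $(t,n)(t,n+1)$ for all $t,n$; $(t,n)(t',n)$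 for all $n$ whenever $t$ is a successor with predecessor $t'$; and $(t,n)(t_n,n)$ for all $n$ whenever $t$ is a non-root limit with down-neighbours $t_0<t_1<t_2<\cdots$. A ray is a one-way infinite path; two rays are equivalent if joined by infinitely many disjoint paths; ends are equivalence classes; the degree of an end is the maximal cardinality of a set of disjoint rays in it. Given a set $\mathcal{R}$ of disjoint equivalent rays, a graph $H$ on $\mathcal{R}$ is a ray graph if there is a set $\mathcal{P}$ of independent paths (no inner vertex of one on another), each meeting $\bigcup\mathcal{R}$ exactly in its endvertices, such that for every edge $RS$ of $H$ there are infinitely many disjoint $R$--$S$ paths in $\mathcal{P}$. $\mathrm{HC}(\kappa)$ states that every end of degree $\kappa$ of every graph contains $\kappa$ disjoint rays admitting a connected ray graph. *)

theory Defs
  imports Main "HOL-Library.Countable_Set"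
begin

definition has_card_aleph1 :: "'a set \<Rightarrow> bool" where
  "has_card_aleph1 A \<longleftrightarrow> (card_of A, cardSuc (card_of (UNIV :: nat set))) \<in> ordIso"

definition card_le_aleph1 :: "'a set \<Rightarrow> bool" where
  "card_le_aleph1 A \<longleftrightarrow> (card_of A, cardSuc (card_of (UNIV :: nat set))) \<in> ordLeq"

definition tlt :: "('a \<Rightarrow> 'a \<Rightarrow> bool) \<Rightarrow> 'a \<Rightarrow> 'a \<Rightarrow> bool" where
  "tlt le x y \<longleftrightarrow> le x y \<and> x \<noteq> y"

definition down_closed :: "'a set \<Rightarrow> ('a \<Rightarrow> 'a \<Rightarrow> bool) \<Rightarrow> 'a \<Rightarrow> 'a set" where
  "down_closed T le t = {s \<in> T. le s t}"

definition below :: "'a set \<Rightarrow> ('a \<Rightarrow> 'a \<Rightarrow> bool) \<Rightarrow> 'a \<Rightarrow> 'a set" where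
  "below T le t = {s \<in> T. tlt le s t}"

definition order_tree :: "'a set \<Rightarrow> ('a \<Rightarrow> 'a \<Rightarrow> bool) \<Rightarrow> bool" where
  "order_tree T le \<longleftrightarrow>
     (\<forall>x\<in>T. le x x) \<and>
     (\<forall>x\<in>T. \<forall>y\<in>T. le x y \<and> le y x \<longrightarrow> x = y) \<and>
     (\<forall>x\<in>T. \<forall>y\<in>T. \<forall>z\<in>T. le x y \<and> le y z \<longrightarrow> le x z) \<and>
     (\<exists>!r\<in>T. \<not> (\<exists>s\<in>T. tlt le s r)) \<and>
     (\<forall>t\<in>T. (\<forall>x\<in>down_closed T le t. \<forall>y\<in>down_closed T le t. le x y \<or> le y x) \<and>
             (\<forall>A. A \<subseteq> down_closed T le t \<and> A \<noteq> {} \<longrightarrow> (\<exists>m\<in>A. \<forall>a\<in>A. le m a)))"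

text \<open>The well-order on the strict down-set of t; its order type is the height of t.\<close>
definition below_rel :: "'a set \<Rightarrow> ('a \<Rightarrow> 'a \<Rightarrow> bool) \<Rightarrow> 'a \<Rightarrow> 'a rel" where
  "below_rel T le t = {(x, y). x \<in> below T le t \<and> y \<in> below T le t \<and> le x y}"

definition same_level :: "'a set \<Rightarrow> ('a \<Rightarrow> 'a \<Rightarrow> bool) \<Rightarrow> 'a \<Rightarrow> 'a \<Rightarrow> bool" where
  "same_level T le s t \<longleftrightarrow> (below_rel T le s, below_rel T le t) \<in> ordIso"

definition level_of :: "'a set \<Rightarrow> ('a \<Rightarrow> 'a \<Rightarrow> bool) \<Rightarrow> 'a \<Rightarrow> 'a set" where
  "level_of T le t = {s \<in> T. same_level T le s t}"

definition is_chain :: "'a set \<Rightarrow> ('a \<Rightarrow> 'a \<Rightarrow> bool) \<Rightarrow> 'a set \<Rightarrow> bool" where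
  "is_chain T le C \<longleftrightarrow> C \<subseteq> T \<and> (\<forall>x\<in>C. \<forall>y\<in>C. le x y \<or> le y x)"

definition is_branch :: "'a set \<Rightarrow> ('a \<Rightarrow> 'a \<Rightarrow> bool) \<Rightarrow> 'a set \<Rightarrow> bool" where
  "is_branch T le C \<longleftrightarrow> is_chain T le C \<and> (\<forall>D. is_chain T le D \<and> C \<subseteq> D \<longrightarrow> D = C)"

definition aronszajn_tree :: "'a set \<Rightarrow> ('a \<Rightarrow> 'a \<Rightarrow> bool) \<Rightarrow> bool" where
  "aronszajn_tree T le \<longleftrightarrow> order_tree T le \<and> has_card_aleph1 T \<and>
     (\<forall>C. is_branch T le C \<longrightarrow> countable C) \<and>
     (\<forall>t\<in>T. countable (level_of T le t))"

definition is_pred :: "'a set \<Rightarrow> ('a \<Rightarrow> 'a \<Rightarrow> bool) \<Rightarrow> 'a \<Rightarrow> 'a \<Rightarrow> bool" where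
  "is_pred T le p t \<longleftrightarrow> p \<in> T \<and> t \<in> T \<and> tlt le p t \<and> \<not> (\<exists>s\<in>T. tlt le p s \<and> tlt le s t)"

definition is_root :: "'a set \<Rightarrow> ('a \<Rightarrow> 'a \<Rightarrow> bool) \<Rightarrow> 'a \<Rightarrow> bool" where
  "is_root T le r \<longleftrightarrow> r \<in> T \<and> \<not> (\<exists>s\<in>T. tlt le s r)"

definition is_limit :: "'a set \<Rightarrow> ('a \<Rightarrow> 'a \<Rightarrow> bool) \<Rightarrow> 'a \<Rightarrow> bool" where
  "is_limit T le t \<longleftrightarrow> t \<in> T \<and> \<not> (\<exists>p. is_pred T le p t)"

definition down_nbrs :: "'a set \<Rightarrow> ('a \<Rightarrow> 'a \<Rightarrow> bool) \<Rightarrow> ('a \<Rightarrow> 'a \<Rightarrow> bool) \<Rightarrow> 'a \<Rightarrow> 'a set" where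
  "down_nbrs T le G t = {s \<in> T. tlt le s t \<and> G s t}"

definition T_graph :: "'a set \<Rightarrow> ('a \<Rightarrow> 'a \<Rightarrow> bool) \<Rightarrow> ('a \<Rightarrow> 'a \<Rightarrow> bool) \<Rightarrow> bool" where
  "T_graph T le G \<longleftrightarrow>
     (\<forall>x y. G x y \<longrightarrow> x \<in> T \<and> y \<in> T) \<and>
     (\<forall>x y. G x y \<longrightarrow> G y x) \<and> (\<forall>x. \<not> G x x) \<and>
     (\<forall>x y. G x y \<longrightarrow> le x y \<or> le y x) \<and>
     (\<forall>t\<in>T. \<forall>s\<in>below T le t. \<exists>u\<in>down_nbrs T le G t. le s u)"

definition order_type_omega :: "'a set \<Rightarrow> ('a \<Rightarrow> 'a \<Rightarrow> bool) \<Rightarrow> 'a set \<Rightarrow> bool" where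
  "order_type_omega T le D \<longleftrightarrow> is_chain T le D \<and> infinite D \<and>
     (\<forall>d\<in>D. finite {e \<in> D. tlt le e d})"

text \<open>Sparseness for trees of height at most omega_1.\<close>
definition sparse_T_graph :: "'a set \<Rightarrow> ('a \<Rightarrow> 'a \<Rightarrow> bool) \<Rightarrow> ('a \<Rightarrow> 'a \<Rightarrow> bool) \<Rightarrow> bool" where
  "sparse_T_graph T le G \<longleftrightarrow> T_graph T le G \<and>
     (\<forall>t\<in>T. \<forall>p. is_pred T le p t \<longrightarrow> down_nbrs T le G t = {p}) \<and>
     (\<forall>t\<in>T. is_limit T le t \<and> \<not> is_root T le t \<longrightarrow> order_type_omega T le (down_nbrs T le G t))"

text \<open>The n-th down-neighbour t_n of a limit t (counting from 0 in increasing order).\<close>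
definition nth_down_nbr :: "'a set \<Rightarrow> ('a \<Rightarrow> 'a \<Rightarrow> bool) \<Rightarrow> ('a \<Rightarrow> 'a \<Rightarrow> bool) \<Rightarrow> 'a \<Rightarrow> nat \<Rightarrow> 'a" where
  "nth_down_nbr T le G t n =
     (THE s. s \<in> down_nbrs T le G t \<and> card {e \<in> down_nbrs T le G t. tlt le e s} = n)"

definition inflation_base :: "'a set \<Rightarrow> ('a \<Rightarrow> 'a \<Rightarrow> bool) \<Rightarrow> ('a \<Rightarrow> 'a \<Rightarrow> bool) \<Rightarrow>
    'a \<times> nat \<Rightarrow> 'a \<times> nat \<Rightarrow> bool" where
  "inflation_base T le G x y \<longleftrightarrow>
     (\<exists>t n. t \<in> T \<and> x = (t, n) \<and> y = (t, Suc n)) \<or>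
     (\<exists>t t' n. is_pred T le t' t \<and> x = (t, n) \<and> y = (t', n)) \<or>
     (\<exists>t n. is_limit T le t \<and> \<not> is_root T le t \<and> x = (t, n) \<and> y = (nth_down_nbr T le G t n, n))"

definition ray_inflation :: "'a set \<Rightarrow> ('a \<Rightarrow> 'a \<Rightarrow> bool) \<Rightarrow> ('a \<Rightarrow> 'a \<Rightarrow> bool) \<Rightarrow>
    'a \<times> nat \<Rightarrow> 'a \<times> nat \<Rightarrow> bool" where
  "ray_inflation T le G x y \<longleftrightarrow> inflation_base T le G x y \<or> inflation_base T le G y x"

definition is_path :: "'v set \<Rightarrow> ('v \<Rightarrow> 'v \<Rightarrow> bool) \<Rightarrow> 'v list \<Rightarrow> bool" where
  "is_path V adj p \<longleftrightarrow> p \<noteq> [] \<and> distinct p \<and> set p \<subseteq> V \<and>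
     (\<forall>i. Suc i < length p \<longrightarrow> adj (p ! i) (p ! Suc i))"

definition is_ray :: "'v set \<Rightarrow> ('v \<Rightarrow> 'v \<Rightarrow> bool) \<Rightarrow> (nat \<Rightarrow> 'v) \<Rightarrow> bool" where
  "is_ray V adj r \<longleftrightarrow> inj r \<and> range r \<subseteq> V \<and> (\<forall>n. adj (r n) (r (Suc n)))"

definition AB_path :: "'v set \<Rightarrow> ('v \<Rightarrow> 'v \<Rightarrow> bool) \<Rightarrow> 'v set \<Rightarrow> 'v set \<Rightarrow> 'v list \<Rightarrow> bool" where
  "AB_path V adj A B p \<longleftrightarrow> is_path V adj p \<and> set p \<inter> A = {hd p} \<and> set p \<inter> B = {last p}"

definition disjoint_paths :: "'v list set \<Rightarrow> bool" where
  "disjoint_paths P \<longleftrightarrow> (\<forall>p\<in>P. \<forall>q\<in>P. p \<noteq> q \<longrightarrow> set p \<inter> set q = {})"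

definition rays_equiv :: "'v set \<Rightarrow> ('v \<Rightarrow> 'v \<Rightarrow> bool) \<Rightarrow> (nat \<Rightarrow> 'v) \<Rightarrow> (nat \<Rightarrow> 'v) \<Rightarrow> bool" where
  "rays_equiv V adj R S \<longleftrightarrow> is_ray V adj R \<and> is_ray V adj S \<and>
     (\<exists>P. infinite P \<and> disjoint_paths P \<and> (\<forall>p\<in>P. AB_path V adj (range R) (range S) p))"

definition is_end :: "'v set \<Rightarrow> ('v \<Rightarrow> 'v \<Rightarrow> bool) \<Rightarrow> (nat \<Rightarrow> 'v) set \<Rightarrow> bool" where
  "is_end V adj \<epsilon> \<longleftrightarrow> (\<exists>R. is_ray V adj R \<and> \<epsilon> = {S. rays_equiv V adj R S})"

definition disjoint_rays :: "'v set \<Rightarrow> ('v \<Rightarrow> 'v \<Rightarrow> bool) \<Rightarrow> (nat \<Rightarrow> 'v) set \<Rightarrow> bool" where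
  "disjoint_rays V adj \<R> \<longleftrightarrow> (\<forall>R\<in>\<R>. is_ray V adj R) \<and>
     (\<forall>R\<in>\<R>. \<forall>S\<in>\<R>. R \<noteq> S \<longrightarrow> range R \<inter> range S = {})"

definition end_degree_aleph1 :: "'v set \<Rightarrow> ('v \<Rightarrow> 'v \<Rightarrow> bool) \<Rightarrow> (nat \<Rightarrow> 'v) set \<Rightarrow> bool" where
  "end_degree_aleph1 V adj \<epsilon> \<longleftrightarrow>
     (\<exists>\<R>. \<R> \<subseteq> \<epsilon> \<and> disjoint_rays V adj \<R> \<and> has_card_aleph1 \<R>) \<and>
     (\<forall>\<R>. \<R> \<subseteq> \<epsilon> \<and> disjoint_rays V adj \<R> \<longrightarrow> card_le_aleph1 \<R>)"

definition inner_vertices :: "'v list \<Rightarrow> 'v set" where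
  "inner_vertices p = set (butlast (tl p))"

definition independent_paths :: "'v list set \<Rightarrow> bool" where
  "independent_paths P \<longleftrightarrow> (\<forall>p\<in>P. \<forall>q\<in>P. p \<noteq> q \<longrightarrow> inner_vertices p \<inter> set q = {})"

definition is_ray_graph :: "'v set \<Rightarrow> ('v \<Rightarrow> 'v \<Rightarrow> bool) \<Rightarrow> (nat \<Rightarrow> 'v) set \<Rightarrow>
    ((nat \<Rightarrow> 'v) \<times> (nat \<Rightarrow> 'v)) set \<Rightarrow> bool" where
  "is_ray_graph V adj \<R> H \<longleftrightarrow>
     H \<subseteq> \<R> \<times> \<R> \<and> sym H \<and> (\<forall>R. (R, R) \<notin> H) \<and>
     (\<exists>P. (\<forall>p\<in>P. is_path V adj p \<and> set p \<inter> (\<Union>R\<in>\<R>. range R) = {hd p, last p}) \<and>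
          independent_paths P \<and>
          (\<forall>(R, S)\<in>H. \<exists>Q\<subseteq>P. infinite Q \<and> disjoint_paths Q \<and>
              (\<forall>q\<in>Q. (hd q \<in> range R \<and> last q \<in> range S) \<or> (hd q \<in> range S \<and> last q \<in> range R))))"

definition connected_on :: "'b set \<Rightarrow> ('b \<times> 'b) set \<Rightarrow> bool" where
  "connected_on X H \<longleftrightarrow> X \<noteq> {} \<and> (\<forall>x\<in>X. \<forall>y\<in>X. (x, y) \<in> H\<^sup>*)"

definition admits_connected_ray_graph :: "'v set \<Rightarrow> ('v \<Rightarrow> 'v \<Rightarrow> bool) \<Rightarrow> (nat \<Rightarrow> 'v) set \<Rightarrow> bool" where
  "admits_connected_ray_graph V adj \<R> \<longleftrightarrow>
     (\<exists>H. is_ray_graph V adj \<R> H \<and> connected_on \<R> H)"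

end

theory Submission
  imports Defs
begin

unbundle cardinal_syntax


locale atree =
  fixes T :: "'a set" and le :: "'a \<Rightarrow> 'a \<Rightarrow> bool" and G :: "'a \<Rightarrow> 'a \<Rightarrow> bool"
  assumes aron: "aronszajn_tree T le"
    and sp: "sparse_T_graph T le G"
    and hyp: "\<forall>t\<in>T. \<exists>S. finite S \<and> S \<subseteq> below T le t \<and>
           (\<forall>t'\<in>T. tlt le t t' \<longrightarrow> down_nbrs T le G t' \<inter> below T le t \<subseteq> S)"
begin

lemma ot: "order_tree T le" using aron unfolding aronszajn_tree_def by (elim conjE)

lemmas otD1 = ot[unfolded order_tree_def, THEN conjunct1]
lemmas otD2 = ot[unfolded order_tree_def, THEN conjunct2, THEN conjunct1]
lemmas otD3 = ot[unfolded order_tree_def, THEN conjunct2, THEN conjunct2, THEN conjunct1]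
lemmas otD4 = ot[unfolded order_tree_def, THEN conjunct2, THEN conjunct2, THEN conjunct2, THEN conjunct1]
lemmas otD5 = ot[unfolded order_tree_def, THEN conjunct2, THEN conjunct2, THEN conjunct2, THEN conjunct2]
lemmas otD = otD1 otD2 otD3 otD4 otD5

lemma refl: "x \<in> T \<Longrightarrow> le x x" using otD(1) by blast
lemma antisym: "x \<in> T \<Longrightarrow> y \<in> T \<Longrightarrow> le x y \<Longrightarrow> le y x \<Longrightarrow> x = y"
  using otD(2) by blast
lemma trans: "x \<in> T \<Longrightarrow> y \<in> T \<Longrightarrow> z \<in> T \<Longrightarrow> le x y \<Longrightarrow> le y z \<Longrightarrow> le x z"
  using otD(3) by blast
lemma comp: "t \<in> T \<Longrightarrow> x \<in> T \<Longrightarrow> y \<in> T \<Longrightarrow> le x t \<Longrightarrow> le y t \<Longrightarrow> le x y \<or> le y x"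
  using otD(5) unfolding down_closed_def by blast
lemma minim: "t \<in> T \<Longrightarrow> A \<subseteq> down_closed T le t \<Longrightarrow> A \<noteq> {} \<Longrightarrow> \<exists>m\<in>A. \<forall>a\<in>A. le m a"
  using otD(5) by blast

lemma tlt_trans: "x \<in> T \<Longrightarrow> y \<in> T \<Longrightarrow> z \<in> T \<Longrightarrow> tlt le x y \<Longrightarrow> tlt le y z \<Longrightarrow> tlt le x z"
  unfolding tlt_def using trans antisym by blast
lemma tlt_le_trans: "x \<in> T \<Longrightarrow> y \<in> T \<Longrightarrow> z \<in> T \<Longrightarrow> tlt le x y \<Longrightarrow> le y z \<Longrightarrow> tlt le x z"
  unfolding tlt_def using trans antisym by blast
lemma le_tlt_trans: "x \<in> T \<Longrightarrow> y \<in> T \<Longrightarrow> z \<in> T \<Longrightarrow> le x y \<Longrightarrow> tlt le y z \<Longrightarrow> tlt le x z"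
  unfolding tlt_def using trans antisym by blast
lemma tlt_not_le: "x \<in> T \<Longrightarrow> y \<in> T \<Longrightarrow> tlt le x y \<Longrightarrow> \<not> le y x"
  unfolding tlt_def using antisym by blast

lemma wf_lt: "wf {(s,t). s \<in> T \<and> t \<in> T \<and> tlt le s t}"
proof (rule wfI_min)
  fix x :: 'a and Q assume "x \<in> Q"
  show "\<exists>z\<in>Q. \<forall>y. (y, z) \<in> {(s,t). s \<in> T \<and> t \<in> T \<and> tlt le s t} \<longrightarrow> y \<notin> Q"
  proof (cases "x \<in> T")
    case False thus ?thesis using \<open>x \<in> Q\<close> by blast
  next
    case True
    let ?A = "Q \<inter> down_closed T le x"
    have "?A \<subseteq> down_closed T le x" by blast
    moreover have "x \<in> ?A" using True \<open>x \<in> Q\<close> refl unfolding down_closed_def by blast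
    ultimately obtain m where m: "m \<in> ?A" "\<forall>a\<in>?A. le m a" using minim[OF True] by blast
    show ?thesis
    proof (rule bexI[of _ m])
      show "m \<in> Q" using m by blast
      show "\<forall>y. (y, m) \<in> {(s,t). s \<in> T \<and> t \<in> T \<and> tlt le s t} \<longrightarrow> y \<notin> Q"
      proof (intro allI impI notI)
        fix y assume y: "(y, m) \<in> {(s,t). s \<in> T \<and> t \<in> T \<and> tlt le s t}" "y \<in> Q"
        have "le y x" using y m True unfolding down_closed_def tlt_def using trans by blast
        hence "y \<in> ?A" using y unfolding down_closed_def by blast
        hence "le m y" using m by blast
        thus False using y tlt_not_le by blast
      qed
    qed
  qed
qed

definition root where "root = (THE r. r \<in> T \<and> \<not> (\<exists>s\<in>T. tlt le s r))"

lemma root_ex: "\<exists>!r. r \<in> T \<and> \<not> (\<exists>s\<in>T. tlt le s r)"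
  by (rule otD4)

lemma root: "root \<in> T" "\<not> (\<exists>s\<in>T. tlt le s root)"
  using theI'[OF root_ex] unfolding root_def by blast+

lemma is_root_iff: "is_root T le t \<longleftrightarrow> t = root"
  using root root_ex unfolding is_root_def by blast

lemma root_le: assumes "t \<in> T" shows "le root t"
proof -
  let ?A = "down_closed T le t"
  have "t \<in> ?A" using assms refl unfolding down_closed_def by blast
  then obtain m where m: "m \<in> ?A" "\<forall>a\<in>?A. le m a" using minim[OF assms, of ?A] by blast
  have "\<not> (\<exists>s\<in>T. tlt le s m)"
  proof
    assume "\<exists>s\<in>T. tlt le s m"
    then obtain s where s: "s \<in> T" "tlt le s m" by blast
    have "s \<in> ?A" using s m assms trans unfolding down_closed_def tlt_def by blast
    thus False using m s tlt_not_le unfolding down_closed_def by blast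
  qed
  hence "m = root" using m root root_ex unfolding down_closed_def by blast
  thus ?thesis using m unfolding down_closed_def by blast
qed

end

context atree begin

lemma Tg: "T_graph T le G" using sp unfolding sparse_T_graph_def by (elim conjE)
lemma sp_pred: "t \<in> T \<Longrightarrow> is_pred T le p t \<Longrightarrow> down_nbrs T le G t = {p}"
  using sp unfolding sparse_T_graph_def by (elim conjE) blast
lemma sp_lim: assumes "is_limit T le t" "t \<noteq> root" shows "order_type_omega T le (down_nbrs T le G t)"
proof -
  have "\<forall>t\<in>T. is_limit T le t \<and> \<not> is_root T le t \<longrightarrow> order_type_omega T le (down_nbrs T le G t)"
    using sp unfolding sparse_T_graph_def by (elim conjE)
  moreover have "t \<in> T" using assms(1) unfolding is_limit_def by (elim conjE)
  moreover have "\<not> is_root T le t" using assms(2) is_root_iff by simp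
  ultimately show ?thesis using assms(1) by blast
qed
lemmas TgD = Tg[unfolded T_graph_def]
lemma cofinal: assumes "t \<in> T" "s \<in> T" "tlt le s t" shows "\<exists>u\<in>down_nbrs T le G t. le s u"
proof -
  have "\<forall>t\<in>T. \<forall>s\<in>below T le t. \<exists>u\<in>down_nbrs T le G t. le s u" using TgD by (elim conjE)
  moreover have "s \<in> below T le t" using assms unfolding below_def by simp
  ultimately show ?thesis using assms(1) by blast
qed

lemma omega_enum:
  assumes om: "order_type_omega T le D"
  shows "\<exists>!s. s \<in> D \<and> card {e\<in>D. tlt le e s} = n"
proof -
  define f where "f s = card {e\<in>D. tlt le e s}" for s
  have DT: "D \<subseteq> T" and ch: "\<forall>x\<in>D. \<forall>y\<in>D. le x y \<or> le y x" and inf: "infinite D"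
    and fin: "\<forall>d\<in>D. finite {e \<in> D. tlt le e d}"
  proof -
    have om': "is_chain T le D \<and> infinite D \<and> (\<forall>d\<in>D. finite {e \<in> D. tlt le e d})"
      using om unfolding order_type_omega_def .
    thus "D \<subseteq> T" "\<forall>x\<in>D. \<forall>y\<in>D. le x y \<or> le y x" "infinite D" "\<forall>d\<in>D. finite {e \<in> D. tlt le e d}"
      unfolding is_chain_def by auto
  qed
  have mono: "f x < f y" if "x \<in> D" "y \<in> D" "tlt le x y" for x y
  proof -
    have "{e\<in>D. tlt le e x} \<subset> {e\<in>D. tlt le e y}"
    proof
      show "{e\<in>D. tlt le e x} \<subseteq> {e\<in>D. tlt le e y}"
      proof
        fix e assume e: "e \<in> {e\<in>D. tlt le e x}"
        hence "tlt le e y" using tlt_trans[of e x y] that DT by blast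
        thus "e \<in> {e\<in>D. tlt le e y}" using e by blast
      qed
      show "{e\<in>D. tlt le e x} \<noteq> {e\<in>D. tlt le e y}" using that unfolding tlt_def by blast
    qed
    moreover have "finite {e\<in>D. tlt le e y}" using fin that(2) by blast
    ultimately show ?thesis unfolding f_def using psubset_card_mono by blast
  qed
  have inj: "inj_on f D"
  proof (rule inj_onI)
    fix x y assume xy: "x \<in> D" "y \<in> D" "f x = f y"
    show "x = y"
    proof (rule ccontr)
      assume "x \<noteq> y"
      then have "tlt le x y \<or> tlt le y x" using ch xy unfolding tlt_def by blast
      thus False using mono[of x y] mono[of y x] xy by auto
    qed
  qed
  have down: "k \<in> f ` D" if sk: "Suc k \<in> f ` D" for k
  proof -
    obtain s where s: "s \<in> D" "f s = Suc k" using sk by (auto elim!: imageE)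
    let ?E = "{e\<in>D. tlt le e s}"
    have finE: "finite ?E" using fin s by blast
    have neE: "?E \<noteq> {}"
    proof
      assume e: "?E = {}"
      have "f s = card ?E" unfolding f_def ..
      hence "f s = 0" unfolding e by simp
      thus False using s by simp
    qed
    define mx where "mx = Max (f ` ?E)"
    have "mx \<in> f ` ?E" unfolding mx_def using finE neE by (intro Max_in) auto
    then obtain m where m: "m \<in> ?E" "f m = mx" by blast
    have mmax: "f e \<le> f m" if "e \<in> ?E" for e
    proof -
      have "f e \<le> Max (f ` ?E)" using finE that by (intro Max_ge) auto
      thus ?thesis using m unfolding mx_def by simp
    qed
    have mD: "m \<in> D" and ms: "tlt le m s" using m by auto
    have "{e\<in>D. tlt le e m} = ?E - {m}"
    proof
      show "{e\<in>D. tlt le e m} \<subseteq> ?E - {m}"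
      proof
        fix e assume e: "e \<in> {e\<in>D. tlt le e m}"
        hence "tlt le e s" using tlt_trans[of e m s] mD ms s DT by blast
        moreover have "e \<noteq> m" using e unfolding tlt_def by blast
        ultimately show "e \<in> ?E - {m}" using e by blast
      qed
      show "?E - {m} \<subseteq> {e\<in>D. tlt le e m}"
      proof
        fix e assume e: "e \<in> ?E - {m}"
        have eD: "e \<in> D" "e \<noteq> m" using e by auto
        have "le e m \<or> le m e" using ch eD mD by blast
        moreover have "\<not> tlt le m e"
        proof
          assume "tlt le m e"
          hence "f m < f e" using mono[of m e] mD eD by blast
          moreover have "f e \<le> f m" using mmax e by blast
          ultimately show False by simp
        qed
        ultimately show "e \<in> {e\<in>D. tlt le e m}" using eD unfolding tlt_def by blast
      qed
    qed
    hence "f m = card (?E - {m})" unfolding f_def by simp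
    also have "\<dots> = card ?E - 1" using m finE by simp
    also have "\<dots> = k" using s unfolding f_def by simp
    finally show ?thesis using m by blast
  qed
  have downall: "\<forall>j\<le>i. j \<in> f ` D" if "i \<in> f ` D" for i
    using that
  proof (induction i)
    case 0 thus ?case by simp
  next
    case (Suc i)
    have "i \<in> f ` D" by (rule down) (rule Suc.prems)
    hence h: "\<forall>j\<le>i. j \<in> f ` D" by (rule Suc.IH)
    show ?case
    proof (intro allI impI)
      fix j assume "j \<le> Suc i"
      hence "j \<le> i \<or> j = Suc i" by (simp only: le_Suc_eq)
      thus "j \<in> f ` D"
      proof
        assume "j \<le> i" thus ?thesis using h by blast
      next
        assume "j = Suc i" thus ?thesis using Suc.prems by simp
      qed
    qed
  qed
  have "infinite (f ` D)" using finite_imageD[OF _ inj] inf by blast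
  hence "\<forall>m. \<exists>k\<ge>m. k \<in> f ` D" by (simp add: infinite_nat_iff_unbounded_le)
  then obtain i where i: "n \<le> i" "i \<in> f ` D" by blast
  have "n \<in> f ` D" using downall[OF i(2)] i(1) by blast
  then obtain s where s: "s \<in> D" "f s = n" by (auto elim!: imageE)
  show ?thesis
  proof (rule ex1I[of _ s])
    show "s \<in> D \<and> card {e\<in>D. tlt le e s} = n" using s unfolding f_def by simp
    fix y assume "y \<in> D \<and> card {e\<in>D. tlt le e y} = n"
    hence "y \<in> D" "f y = f s" using s unfolding f_def by auto
    thus "y = s" using inj s(1) unfolding inj_on_def by blast
  qed
qed

lemma down_nbrs_sub: "s \<in> down_nbrs T le G t \<Longrightarrow> s \<in> T \<and> tlt le s t"
  unfolding down_nbrs_def by simp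

lemma nth_dn:
  assumes "is_limit T le u" "u \<noteq> root"
  shows "nth_down_nbr T le G u n \<in> down_nbrs T le G u"
    "card {e \<in> down_nbrs T le G u. tlt le e (nth_down_nbr T le G u n)} = n"
proof -
  define P where "P s \<longleftrightarrow> s \<in> down_nbrs T le G u \<and> card {e \<in> down_nbrs T le G u. tlt le e s} = n" for s
  have ex: "\<exists>!s. P s" unfolding P_def by (rule omega_enum[OF sp_lim[OF assms]])
  have "P (THE s. P s)" using ex by (rule theI')
  moreover have "(THE s. P s) = nth_down_nbr T le G u n" unfolding P_def nth_down_nbr_def by simp
  ultimately have "P (nth_down_nbr T le G u n)" by simp
  thus "nth_down_nbr T le G u n \<in> down_nbrs T le G u"
    "card {e \<in> down_nbrs T le G u. tlt le e (nth_down_nbr T le G u n)} = n" unfolding P_def by simp_all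
qed

lemma nth_dn_inj:
  assumes "is_limit T le u" "u \<noteq> root" "nth_down_nbr T le G u n = nth_down_nbr T le G u m"
  shows "n = m"
proof -
  have "n = card {e \<in> down_nbrs T le G u. tlt le e (nth_down_nbr T le G u n)}"
    using nth_dn(2)[OF assms(1,2), of n] by simp
  also have "\<dots> = card {e \<in> down_nbrs T le G u. tlt le e (nth_down_nbr T le G u m)}"
    using assms(3) by simp
  also have "\<dots> = m" using nth_dn(2)[OF assms(1,2), of m] by simp
  finally show ?thesis .
qed

end

context atree begin

lemma dc_chain: assumes "t \<in> T" shows "is_chain T le (down_closed T le t)"
  unfolding is_chain_def
proof
  show "down_closed T le t \<subseteq> T" unfolding down_closed_def by blast
  show "\<forall>x\<in>down_closed T le t. \<forall>y\<in>down_closed T le t. le x y \<or> le y x"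
    using comp[OF assms] unfolding down_closed_def by blast
qed

lemma branch_ext: assumes C: "is_chain T le C" shows "\<exists>B. is_branch T le B \<and> C \<subseteq> B"
proof -
  let ?A = "{Y. is_chain T le Y \<and> C \<subseteq> Y}"
  have "\<exists>M\<in>?A. \<forall>X\<in>?A. M \<subseteq> X \<longrightarrow> X = M"
  proof (rule Zorn_Lemma2, rule ballI)
    fix K assume K: "K \<in> chains ?A"
    show "\<exists>U\<in>?A. \<forall>X\<in>K. X \<subseteq> U"
    proof (cases "K = {}")
      case True thus ?thesis using C by blast
    next
      case False
      have Ksub: "K \<subseteq> ?A" using chainsD2[OF K] .
      have "is_chain T le (\<Union>K)" unfolding is_chain_def
      proof
        show "\<Union>K \<subseteq> T" using Ksub unfolding is_chain_def by blast
        show "\<forall>x\<in>\<Union>K. \<forall>y\<in>\<Union>K. le x y \<or> le y x"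
        proof (intro ballI)
          fix x y assume "x \<in> \<Union>K" "y \<in> \<Union>K"
          then obtain X Y where XY: "X \<in> K" "Y \<in> K" "x \<in> X" "y \<in> Y" by blast
          have "X \<subseteq> Y \<or> Y \<subseteq> X" using chainsD[OF K XY(1,2)] .
          thus "le x y \<or> le y x"
          proof
            assume "X \<subseteq> Y" thus ?thesis using XY Ksub unfolding is_chain_def by blast
          next
            assume "Y \<subseteq> X" thus ?thesis using XY Ksub unfolding is_chain_def by blast
          qed
        qed
      qed
      moreover have "C \<subseteq> \<Union>K" using False Ksub by blast
      ultimately have "\<Union>K \<in> ?A" by simp
      moreover have "\<forall>X\<in>K. X \<subseteq> \<Union>K" by blast
      ultimately show ?thesis by (rule bexI[rotated])
    qed
  qed
  then obtain M where M1: "M \<in> ?A" and M2: "\<forall>X\<in>?A. M \<subseteq> X \<longrightarrow> X = M"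
    by (elim bexE)
  have Mc: "is_chain T le M" and CM: "C \<subseteq> M" using M1 by simp_all
  have "is_branch T le M" unfolding is_branch_def
  proof (intro conjI allI impI)
    show "is_chain T le M" by (rule Mc)
    fix D assume D: "is_chain T le D \<and> M \<subseteq> D"
    hence "D \<in> ?A" using CM by auto
    thus "D = M" using M2 D by blast
  qed
  thus ?thesis using CM by blast
qed

lemmas aronD = aron[unfolded aronszajn_tree_def]
lemma branches_countable: "is_branch T le B \<Longrightarrow> countable B"
proof -
  have "\<forall>C. is_branch T le C \<longrightarrow> countable C" using aronD by (elim conjE)
  thus "is_branch T le B \<Longrightarrow> countable B" by blast
qed

lemma dc_countable: assumes "t \<in> T" shows "countable (down_closed T le t)"
proof -
  obtain B where "is_branch T le B" "down_closed T le t \<subseteq> B" using branch_ext[OF dc_chain[OF assms]] by blast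
  thus ?thesis using branches_countable countable_subset by blast
qed

definition dcl :: "'a set \<Rightarrow> 'a set" where "dcl X = {s \<in> T. \<exists>x\<in>X. le s x}"

lemma dcl_countable: assumes "countable X" "X \<subseteq> T" shows "countable (dcl X)"
proof -
  have "dcl X = (\<Union>x\<in>X. down_closed T le x)" unfolding dcl_def down_closed_def by blast
  moreover have "countable (\<Union>x\<in>X. down_closed T le x)"
    using assms by (intro countable_UN) (auto intro: dc_countable)
  ultimately show ?thesis by simp
qed

lemma levels_countable: "t \<in> T \<Longrightarrow> countable (level_of T le t)"
proof -
  have "\<forall>t\<in>T. countable (level_of T le t)" using aronD by (elim conjE)
  thus "t \<in> T \<Longrightarrow> countable (level_of T le t)" by blast
qed

end

context atree begin

abbreviation wo where "wo t \<equiv> below_rel T le t"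

lemma below_sub: "below T le t \<subseteq> T" unfolding below_def by blast

lemma Field_wo: "Field (wo t) = below T le t"
proof
  show "Field (wo t) \<subseteq> below T le t" unfolding below_rel_def Field_def by blast
  show "below T le t \<subseteq> Field (wo t)"
  proof
    fix x assume x: "x \<in> below T le t"
    hence "le x x" using refl below_sub by blast
    hence "(x, x) \<in> wo t" using x unfolding below_rel_def by blast
    thus "x \<in> Field (wo t)" unfolding Field_def by blast
  qed
qed

lemma WO: assumes t: "t \<in> T" shows "Well_order (wo t)"
proof -
  let ?r = "wo t" and ?B = "below T le t"
  have sub: "?r \<subseteq> ?B \<times> ?B" unfolding below_rel_def by blast
  have rf: "refl_on ?B ?r" unfolding refl_on_def below_rel_def using refl below_sub by blast
  have tr: "Relation.trans ?r"
  proof (rule transI)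
    fix x y z assume "(x, y) \<in> ?r" "(y, z) \<in> ?r"
    hence "x \<in> ?B" "y \<in> ?B" "z \<in> ?B" "le x y" "le y z" unfolding below_rel_def by auto
    moreover hence "le x z" using trans below_sub by blast
    ultimately show "(x, z) \<in> ?r" unfolding below_rel_def by blast
  qed
  have an: "antisym ?r"
  proof (rule antisymI)
    fix x y assume "(x, y) \<in> ?r" "(y, x) \<in> ?r"
    hence "x \<in> ?B" "y \<in> ?B" "le x y" "le y x" unfolding below_rel_def by auto
    thus "x = y" using antisym below_sub by blast
  qed
  have to: "total_on ?B ?r" unfolding total_on_def
  proof (intro ballI impI)
    fix x y assume xy: "x \<in> ?B" "y \<in> ?B" "x \<noteq> y"
    hence "x \<in> T" "y \<in> T" "le x t" "le y t" unfolding below_def tlt_def by auto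
    hence "le x y \<or> le y x" using comp[OF t] by blast
    thus "(x, y) \<in> ?r \<or> (y, x) \<in> ?r" using xy unfolding below_rel_def by blast
  qed
  have "?r - Id \<subseteq> {(s,t). s \<in> T \<and> t \<in> T \<and> tlt le s t}"
    unfolding below_rel_def below_def tlt_def by blast
  hence w: "wf (?r - Id)" using wf_subset[OF wf_lt] by blast
  show ?thesis unfolding well_order_on_def linear_order_on_def partial_order_on_def preorder_on_def Field_wo
    using sub rf tr an to w by blast
qed

lemma Restr_wo: assumes t: "t \<in> T" and e: "e \<in> below T le t"
  shows "Restr (wo t) (underS (wo t) e) = wo e"
proof -
  have eT: "e \<in> T" and et: "tlt le e t" using e unfolding below_def by auto
  have bb: "below T le e \<subseteq> below T le t"
  proof
    fix b assume "b \<in> below T le e"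
    hence "b \<in> T" "tlt le b e" unfolding below_def by auto
    thus "b \<in> below T le t" using tlt_trans[of b e t] eT t et unfolding below_def by blast
  qed
  have u: "underS (wo t) e = below T le e"
  proof
    show "underS (wo t) e \<subseteq> below T le e" unfolding underS_def below_rel_def below_def tlt_def by blast
    show "below T le e \<subseteq> underS (wo t) e"
    proof
      fix b assume b: "b \<in> below T le e"
      hence "b \<in> below T le t" using bb by blast
      moreover have "le b e" "b \<noteq> e" using b unfolding below_def tlt_def by auto
      ultimately show "b \<in> underS (wo t) e" using e unfolding underS_def below_rel_def by blast
    qed
  qed
  show ?thesis unfolding u using bb unfolding below_rel_def by blast
qed

lemma wo_less_realized:
  assumes u: "u \<in> T" and u': "u' \<in> T" and less: "wo u <o wo u'"
  shows "\<exists>e\<in>below T le u'. wo u =o wo e"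
proof -
  obtain a where a: "a \<in> Field (wo u')" "wo u =o Restr (wo u') (underS (wo u') a)"
    using ordLess_iff_ordIso_Restr[OF WO[OF u'] WO[OF u]] less by blast
  have "a \<in> below T le u'" using a(1) Field_wo by blast
  moreover have "wo u =o wo a" using a(2) Restr_wo[OF u' \<open>a \<in> below T le u'\<close>] by simp
  ultimately show ?thesis by blast
qed

lemma tops_countable:
  assumes E: "countable E"
  shows "countable {u \<in> T. below T le u \<subseteq> E}"
proof -
  define U where "U = {u \<in> T. below T le u \<subseteq> E}"
  define P where "P u e \<longleftrightarrow> e \<in> E \<and> e \<in> T \<and> wo u =o wo e" for u e
  define key where "key u = (if (\<exists>u'\<in>U. wo u <o wo u') then Some (SOME e. P u e) else None)" for u
  have keySome: "P u e" if u: "u \<in> U" and k: "key u = Some e" for u e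
  proof -
    have ex: "\<exists>u'\<in>U. wo u <o wo u'" using k unfolding key_def by (auto split: if_splits)
    then obtain u' where u': "u' \<in> U" "wo u <o wo u'" by blast
    have "\<exists>e\<in>below T le u'. wo u =o wo e" using wo_less_realized u u' unfolding U_def by blast
    hence "\<exists>e. P u e" using u' below_sub unfolding U_def P_def by blast
    hence "P u (SOME e. P u e)" by (rule someI_ex)
    moreover have "e = (SOME e. P u e)" using k ex unfolding key_def by simp
    ultimately show ?thesis by simp
  qed
  have keyNone: "wo u =o wo u0" if "u \<in> U" "u0 \<in> U" "key u = None" "key u0 = None" for u u0
  proof -
    have uT: "u \<in> T" "u0 \<in> T" using that unfolding U_def by auto
    have "\<not> wo u <o wo u0" using that(2,3) unfolding key_def by (auto split: if_splits)
    hence "wo u0 \<le>o wo u" using ordLess_or_ordLeq[OF WO[OF uT(1)] WO[OF uT(2)]] by blast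
    moreover have "\<not> wo u0 <o wo u" using that(1,4) unfolding key_def by (auto split: if_splits)
    hence "wo u \<le>o wo u0" using ordLess_or_ordLeq[OF WO[OF uT(2)] WO[OF uT(1)]] by blast
    ultimately show ?thesis using ordIso_iff_ordLeq by blast
  qed
  have fib: "countable {u \<in> U. key u = k}" if kk: "k \<in> key ` U" for k
  proof (cases k)
    case None
    then obtain u0 where u0: "u0 \<in> U" "key u0 = None" using kk by auto
    have "{u \<in> U. key u = k} \<subseteq> level_of T le u0"
    proof
      fix u assume "u \<in> {u \<in> U. key u = k}"
      hence uu: "u \<in> U" "key u = None" using None by auto
      hence "wo u =o wo u0" using keyNone u0 by blast
      thus "u \<in> level_of T le u0" using uu(1) unfolding level_of_def same_level_def U_def by blast
    qed
    moreover have "u0 \<in> T" using u0 unfolding U_def by blast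
    ultimately show ?thesis using levels_countable countable_subset by blast
  next
    case (Some e)
    then obtain u0 where u0: "u0 \<in> U" "key u0 = Some e" using kk by auto
    have Pe: "P u0 e" using keySome[OF u0(1) u0(2)] .
    have "{u \<in> U. key u = k} \<subseteq> level_of T le e"
    proof
      fix u assume "u \<in> {u \<in> U. key u = k}"
      hence uu: "u \<in> U" "key u = Some e" using Some by auto
      hence "P u e" using keySome by blast
      thus "u \<in> level_of T le e" using uu(1) unfolding level_of_def same_level_def U_def P_def by blast
    qed
    moreover have "e \<in> T" using Pe unfolding P_def by blast
    ultimately show ?thesis using levels_countable countable_subset by blast
  qed
  have "key ` U \<subseteq> insert None (Some ` E)"
  proof
    fix k assume "k \<in> key ` U"
    then obtain u where u: "u \<in> U" "k = key u" by blast
    show "k \<in> insert None (Some ` E)"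
    proof (cases "key u")
      case None thus ?thesis using u by simp
    next
      case (Some e) thus ?thesis using keySome[OF u(1) Some] u unfolding P_def by simp
    qed
  qed
  hence ck: "countable (key ` U)" using E countable_subset by (metis countable_image countable_insert)
  have "U = (\<Union>k\<in>key ` U. {u \<in> U. key u = k})" by blast
  moreover have "countable (\<Union>k\<in>key ` U. {u \<in> U. key u = k})"
    using ck fib by (intro countable_UN) auto
  ultimately show ?thesis unfolding U_def by simp
qed

end

context atree begin

abbreviation adj where "adj \<equiv> ray_inflation T le G"

definition Sf where "Sf t = (SOME S. finite S \<and> S \<subseteq> below T le t \<and>
           (\<forall>t'\<in>T. tlt le t t' \<longrightarrow> down_nbrs T le G t' \<inter> below T le t \<subseteq> S))"

lemma Sf: assumes "t \<in> T"
  shows "finite (Sf t)" "Sf t \<subseteq> below T le t"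
    "\<And>t'. t' \<in> T \<Longrightarrow> tlt le t t' \<Longrightarrow> down_nbrs T le G t' \<inter> below T le t \<subseteq> Sf t"
proof -
  have "\<exists>S. finite S \<and> S \<subseteq> below T le t \<and>
           (\<forall>t'\<in>T. tlt le t t' \<longrightarrow> down_nbrs T le G t' \<inter> below T le t \<subseteq> S)"
    using hyp assms by blast
  hence "finite (Sf t) \<and> Sf t \<subseteq> below T le t \<and>
           (\<forall>t'\<in>T. tlt le t t' \<longrightarrow> down_nbrs T le G t' \<inter> below T le t \<subseteq> Sf t)"
    unfolding Sf_def by (rule someI_ex)
  thus "finite (Sf t)" "Sf t \<subseteq> below T le t"
    "\<And>t'. t' \<in> T \<Longrightarrow> tlt le t t' \<Longrightarrow> down_nbrs T le G t' \<inter> below T le t \<subseteq> Sf t" by blast+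
qed

lemma is_pred_D: "is_pred T le p t \<Longrightarrow> p \<in> T \<and> t \<in> T \<and> tlt le p t \<and> \<not> (\<exists>s\<in>T. tlt le p s \<and> tlt le s t)"
  unfolding is_pred_def by simp

lemma limit_T: "is_limit T le t \<Longrightarrow> t \<in> T" unfolding is_limit_def by simp

lemma limit_step: assumes "is_limit T le t" "t \<noteq> root"
  shows "nth_down_nbr T le G t n \<in> T" "tlt le (nth_down_nbr T le G t n) t"
  using down_nbrs_sub[OF nth_dn(1)[OF assms]] by auto

lemma base_cases:
  assumes "inflation_base T le G (a, n) (b, m)"
  obtains (vert) "a \<in> T" "b = a" "m = Suc n"
  | (pred) "is_pred T le b a" "m = n"
  | (lim) "is_limit T le a" "a \<noteq> root" "b = nth_down_nbr T le G a n" "m = n"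
  using assms unfolding inflation_base_def is_root_iff by blast

lemma adj_T: assumes "adj (a, n) (b, m)" shows "a \<in> T" "b \<in> T" "le a b \<or> le b a"
proof -
  have "(a \<in> T \<and> b \<in> T \<and> (le a b \<or> le b a))"
    if "inflation_base T le G (a, n) (b, m)" for a n b m
    using that
  proof (cases rule: base_cases)
    case vert thus ?thesis using refl by simp
  next
    case pred thus ?thesis using is_pred_D[of b a] unfolding tlt_def by blast
  next
    case lim thus ?thesis using limit_step[of a n] limit_T[of a] unfolding tlt_def by blast
  qed
  thus "a \<in> T" "b \<in> T" "le a b \<or> le b a" using assms unfolding ray_inflation_def by blast+
qed

lemma adj_sym: "adj x y \<Longrightarrow> adj y x" unfolding ray_inflation_def by blast

lemma crossing:
  assumes u: "u \<in> T" and a: "adj (s, n) (t, m)" and nu: "\<not> le u s" and ut: "le u t"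
  shows "tlt le s u \<and> (is_pred T le s u \<or> (is_limit T le u \<and> u \<noteq> root \<and> s = nth_down_nbr T le G u n)
     \<or> (s \<in> Sf u \<and> n \<le> card (Sf s)))"
proof -
  have sT: "s \<in> T" and tT: "t \<in> T" using adj_T[OF a] by auto
  have not_below: False if "le t s" using trans[OF u tT sT ut that] nu by blast
  have slu: "tlt le s u" if st: "tlt le s t"
  proof -
    have "le s u \<or> le u s" using comp[OF tT sT u] st ut unfolding tlt_def by blast
    hence "le s u" using nu by blast
    moreover have "s \<noteq> u" using nu refl[OF u] by blast
    ultimately show ?thesis unfolding tlt_def by blast
  qed
  have "inflation_base T le G (s, n) (t, m) \<or> inflation_base T le G (t, m) (s, n)"
    using a unfolding ray_inflation_def .
  thus ?thesis
  proof
    assume b: "inflation_base T le G (s, n) (t, m)"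
    show ?thesis using b
    proof (cases rule: base_cases)
      case vert thus ?thesis using ut nu by simp
    next
      case pred thus ?thesis using not_below is_pred_D[of t s] unfolding tlt_def by blast
    next
      case lim thus ?thesis using not_below limit_step[of s n] unfolding tlt_def by blast
    qed
  next
    assume b: "inflation_base T le G (t, m) (s, n)"
    show ?thesis using b
    proof (cases rule: base_cases)
      case vert thus ?thesis using ut nu by simp
    next
      case pred
      have st: "tlt le s t" using is_pred_D[OF pred(1)] by blast
      have su: "tlt le s u" using slu[OF st] .
      have "u = t"
      proof (rule ccontr)
        assume "u \<noteq> t"
        hence "tlt le u t" using ut unfolding tlt_def by blast
        thus False using is_pred_D[OF pred(1)] su u by blast
      qed
      thus ?thesis using su pred by simp
    next
      case lim
      have nd: "s \<in> down_nbrs T le G t" using nth_dn(1)[OF lim(1,2), of m] lim(3) by simp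
      have st: "tlt le s t" using down_nbrs_sub[OF nd] by blast
      have su: "tlt le s u" using slu[OF st] .
      show ?thesis
      proof (cases "u = t")
        case True thus ?thesis using su lim by simp
      next
        case False
        hence ult: "tlt le u t" using ut unfolding tlt_def by blast
        have "s \<in> below T le u" using su sT unfolding below_def by blast
        hence sS: "s \<in> Sf u" using Sf(3)[OF u tT ult] nd by blast
        have "{e \<in> down_nbrs T le G t. tlt le e s} \<subseteq> Sf s"
        proof
          fix e assume e: "e \<in> {e \<in> down_nbrs T le G t. tlt le e s}"
          hence "e \<in> below T le s" using down_nbrs_sub unfolding below_def by blast
          thus "e \<in> Sf s" using Sf(3)[OF sT tT st] e by blast
        qed
        hence "card {e \<in> down_nbrs T le G t. tlt le e s} \<le> card (Sf s)"
          using Sf(1)[OF sT] card_mono by blast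
        moreover have "card {e \<in> down_nbrs T le G t. tlt le e s} = m"
          using nth_dn(2)[OF lim(1,2), of m] lim(3) by simp
        ultimately show ?thesis using sS su lim(4) by simp
      qed
    qed
  qed
qed

end


lemma list_cross:
  assumes "xs \<noteq> []" "P (hd xs) \<noteq> P (last xs)"
  shows "\<exists>i. Suc i < length xs \<and> P (xs ! i) \<noteq> P (xs ! Suc i)"
  using assms
proof (induction xs)
  case Nil thus ?case by simp
next
  case (Cons x xs)
  show ?case
  proof (cases "xs = []")
    case True thus ?thesis using Cons.prems by simp
  next
    case False
    show ?thesis
    proof (cases "P x = P (hd xs)")
      case True
      hence "P (hd xs) \<noteq> P (last xs)" using Cons.prems False by simp
      then obtain i where "Suc i < length xs" "P (xs ! i) \<noteq> P (xs ! Suc i)" using Cons.IH False by blast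
      thus ?thesis by (intro exI[of _ "Suc i"]) simp
    next
      case F2: False
      have "xs ! 0 = hd xs" using False by (simp add: hd_conv_nth)
      thus ?thesis using F2 False by (intro exI[of _ 0]) simp
    qed
  qed
qed

lemma inner_mem:
  assumes "x \<in> set q" "x \<noteq> hd q" "x \<noteq> last q"
  shows "x \<in> inner_vertices q"
proof -
  obtain a q' where q: "q = a # q'" using assms(1) by (cases q) auto
  have "x \<in> set q'" using assms q by simp
  hence ne: "q' \<noteq> []" by auto
  have "last q = last q'" using q ne by simp
  have eq: "butlast q' @ [last q'] = q'" using ne by simp
  have "x \<in> set (butlast q' @ [last q'])" using eq \<open>x \<in> set q'\<close> by simp
  hence "x \<in> set (butlast q') \<or> x = last q'" by auto
  hence "x \<in> set (butlast q')" using assms(3) \<open>last q = last q'\<close> by simp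
  thus ?thesis unfolding inner_vertices_def q by simp
qed

context atree begin

lemma ray_cone:
  assumes R: "is_ray (T \<times> UNIV) adj R" and u: "u \<in> T" and D: "\<forall>v. v \<in> range R \<longrightarrow> fst v \<notin> D"
    and bu: "below T le u \<subseteq> D" and u0: "le u (fst (R 0))"
  shows "le u (fst (R k))"
proof (induction k)
  case 0 thus ?case using u0 .
next
  case (Suc k)
  have a: "adj (fst (R k), snd (R k)) (fst (R (Suc k)), snd (R (Suc k)))"
    using R unfolding is_ray_def by simp
  let ?t = "fst (R k)" and ?t' = "fst (R (Suc k))"
  have tT: "?t \<in> T" "?t' \<in> T" and cmp: "le ?t ?t' \<or> le ?t' ?t" using adj_T[OF a] by auto
  show ?case using cmp
  proof
    assume "le ?t ?t'" thus ?thesis using trans[OF u tT] Suc.IH by blast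
  next
    assume h: "le ?t' ?t"
    have "le u ?t' \<or> le ?t' u" using comp[OF tT(1) u tT(2) Suc.IH h] .
    thus ?thesis
    proof
      assume "le ?t' u"
      moreover have "R (Suc k) \<in> range R" by simp
      hence "?t' \<notin> D" using D by blast
      ultimately have "?t' = u" using bu tT unfolding below_def tlt_def by blast
      thus ?thesis using refl[OF u] by simp
    qed
  qed
qed

end

context atree begin

lemma witness:
  assumes Rray: "is_ray (T \<times> UNIV) adj R" and Sray: "is_ray (T \<times> UNIV) adj S"
    and Ddef: "D = {u \<in> T. below T le u \<subseteq> dcl (fst ` range S)}"
    and RnD: "\<forall>v\<in>range R. fst v \<notin> D"
    and Qinf: "infinite Q" and Qdisj: "disjoint_paths Q" and Qpath: "\<forall>q\<in>Q. is_path (T \<times> UNIV) adj q"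
    and Qend: "\<forall>q\<in>Q. (hd q \<in> range S \<and> last q \<in> range R) \<or> (hd q \<in> range R \<and> last q \<in> range S)"
  shows "\<exists>q\<in>Q. \<exists>x. x \<in> inner_vertices q \<and> fst x \<in> D"
proof -
  define C where "C = fst ` range S"
  have CT: "C \<subseteq> T"
  proof
    fix c assume "c \<in> C"
    then obtain v where v: "v \<in> range S" "c = fst v" unfolding C_def by blast
    have "range S \<subseteq> T \<times> UNIV" using Sray unfolding is_ray_def by blast
    thus "c \<in> T" using v by (auto simp: mem_Times_iff)
  qed
  have fstC: "fst v \<in> C" if "v \<in> range S" for v using that unfolding C_def by blast
  have D_down: "v \<in> D" if "u \<in> D" "v \<in> T" "le v u" for u v
  proof -
    have "below T le v \<subseteq> below T le u"
    proof
      fix x assume "x \<in> below T le v"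
      hence "x \<in> T" "tlt le x v" unfolding below_def by auto
      hence "tlt le x u" using tlt_le_trans[of x v u] that Ddef by blast
      thus "x \<in> below T le u" using \<open>x \<in> T\<close> unfolding below_def by blast
    qed
    thus ?thesis using that Ddef by blast
  qed
  have CD: "C \<subseteq> D"
  proof
    fix c assume c: "c \<in> C"
    have "below T le c \<subseteq> dcl C"
    proof
      fix x assume "x \<in> below T le c"
      thus "x \<in> dcl C" using c unfolding below_def dcl_def tlt_def by blast
    qed
    thus "c \<in> D" using c CT Ddef C_def by blast
  qed
  have R0: "R 0 \<in> range R" by simp
  define t0 where "t0 = fst (R 0)"
  have "R 0 \<in> T \<times> UNIV" using Rray unfolding is_ray_def by blast
  hence t0T: "t0 \<in> T" unfolding t0_def by (simp add: mem_Times_iff)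
  have t0D: "t0 \<notin> D" using RnD R0 unfolding t0_def by blast
  let ?A = "{s \<in> down_closed T le t0. s \<notin> D}"
  have "t0 \<in> ?A" using t0T t0D refl unfolding down_closed_def by blast
  then obtain u where uA: "u \<in> ?A" and umin: "\<forall>a\<in>?A. le u a"
    using minim[OF t0T, of ?A] by blast
  have uT: "u \<in> T" and ut0: "le u t0" and uD: "u \<notin> D" using uA unfolding down_closed_def by auto
  have bu: "below T le u \<subseteq> D"
  proof
    fix x assume x: "x \<in> below T le u"
    hence xT: "x \<in> T" and xu: "tlt le x u" unfolding below_def by auto
    have "le x t0" using trans[OF xT uT t0T] xu ut0 unfolding tlt_def by blast
    show "x \<in> D"
    proof (rule ccontr)
      assume "x \<notin> D"
      hence "x \<in> ?A" using xT \<open>le x t0\<close> unfolding down_closed_def by blast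
      hence "le u x" using umin by blast
      thus False using tlt_not_le[OF xT uT xu] by blast
    qed
  qed
  have cone: "le u (fst (R k))" for k
    using ray_cone[OF Rray uT _ bu] RnD ut0 unfolding t0_def by blast
  have ncone: "\<not> le u (fst v)" if "v \<in> range S" for v
  proof
    assume "le u (fst v)"
    moreover have "fst v \<in> D" using that CD unfolding C_def by blast
    ultimately have "u \<in> D" using D_down uT by blast
    thus False using uD by blast
  qed
  have uD2: "\<not> below T le u \<subseteq> dcl C" using uD uT Ddef C_def by blast
  have pred_ok: "p \<notin> C" if pr: "is_pred T le p u" for p
  proof
    assume pC: "p \<in> C"
    have "below T le u \<subseteq> dcl C"
    proof
      fix x assume "x \<in> below T le u"
      hence xT: "x \<in> T" and xu: "tlt le x u" unfolding below_def by auto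
      have pT: "p \<in> T" and pu: "tlt le p u" and nb: "\<not> (\<exists>s\<in>T. tlt le p s \<and> tlt le s u)"
        using is_pred_D[OF pr] by auto
      have "le x p \<or> le p x" using comp[OF uT xT pT] xu pu unfolding tlt_def by blast
      hence "le x p"
      proof
        assume "le p x"
        hence "p = x" using nb xT xu unfolding tlt_def by blast
        thus "le x p" using refl[OF xT] by simp
      qed
      thus "x \<in> dcl C" using pC xT unfolding dcl_def by blast
    qed
    thus False using uD2 by blast
  qed
  let ?nth = "nth_down_nbr T le G u"
  have lim_ok: "finite {n. (?nth n, n) \<in> range S}" if lim: "is_limit T le u" "u \<noteq> root"
  proof (rule ccontr)
    assume ninf: "infinite {n. (?nth n, n) \<in> range S}"
    let ?N = "{n. (?nth n, n) \<in> range S}"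
    let ?Y = "?nth ` ?N"
    have "inj_on ?nth ?N" using nth_dn_inj[OF lim] unfolding inj_on_def by blast
    hence Yinf: "infinite ?Y" using ninf finite_imageD by blast
    have YC: "?Y \<subseteq> C"
    proof
      fix y assume "y \<in> ?Y"
      then obtain n where "n \<in> ?N" "y = ?nth n" by blast
      hence "(y, n) \<in> range S" by simp
      from fstC[OF this] show "y \<in> C" by simp
    qed
    have Ydn: "?Y \<subseteq> down_nbrs T le G u" using nth_dn(1)[OF lim] by blast
    have om: "order_type_omega T le (down_nbrs T le G u)" using sp_lim[OF lim] .
    have "below T le u \<subseteq> dcl C"
    proof
      fix x assume "x \<in> below T le u"
      hence xT: "x \<in> T" and xu: "tlt le x u" unfolding below_def by auto
      obtain e where e: "e \<in> down_nbrs T le G u" "le x e" using cofinal[OF uT xT xu] by blast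
      have "finite {e' \<in> down_nbrs T le G u. tlt le e' e}"
        using om e(1) unfolding order_type_omega_def by blast
      hence "finite (insert e {e' \<in> down_nbrs T le G u. tlt le e' e})" by simp
      hence "infinite (?Y - insert e {e' \<in> down_nbrs T le G u. tlt le e' e})"
        using Yinf Diff_infinite_finite by blast
      hence "?Y - insert e {e' \<in> down_nbrs T le G u. tlt le e' e} \<noteq> {}" by (metis finite.emptyI)
      then obtain y where y0: "y \<in> ?Y - insert e {e' \<in> down_nbrs T le G u. tlt le e' e}" by blast
      hence y: "y \<in> ?Y" "y \<noteq> e" "\<not> tlt le y e" using Ydn by blast+
      have yT: "y \<in> T" and yu: "tlt le y u" using down_nbrs_sub Ydn y(1) by blast+
      have eT: "e \<in> T" and eu: "tlt le e u" using down_nbrs_sub e(1) by blast+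
      have "le y e \<or> le e y" using comp[OF uT yT eT] yu eu unfolding tlt_def by blast
      hence "le e y" using y unfolding tlt_def by blast
      hence "le x y" using trans[OF xT eT yT] e(2) by blast
      thus "x \<in> dcl C" using YC y(1) xT unfolding dcl_def by blast
    qed
    thus False using uD2 by blast
  qed
  define F where "F = {x \<in> range S. \<exists>y. adj x y \<and> \<not> le u (fst x) \<and> le u (fst y)}"
  define F2 where "F2 = (\<lambda>n. (?nth n, n)) ` {n. is_limit T le u \<and> u \<noteq> root \<and> (?nth n, n) \<in> range S}"
  have fF2: "finite F2"
  proof (cases "is_limit T le u \<and> u \<noteq> root")
    case True
    hence "{n. is_limit T le u \<and> u \<noteq> root \<and> (?nth n, n) \<in> range S} = {n. (?nth n, n) \<in> range S}" by simp
    thus ?thesis using lim_ok True unfolding F2_def by simp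
  next
    case False thus ?thesis unfolding F2_def by simp
  qed
  have fF3: "finite (Sigma (Sf u) (\<lambda>s. {..card (Sf s)}))"
    using Sf(1)[OF uT] by (intro finite_SigmaI) auto
  have "F \<subseteq> F2 \<union> Sigma (Sf u) (\<lambda>s. {..card (Sf s)})"
  proof
    fix x assume x: "x \<in> F"
    obtain s n where xs: "x = (s, n)" by (cases x)
    obtain y where y: "adj x y" "\<not> le u (fst x)" "le u (fst y)" and xS: "x \<in> range S"
      using x unfolding F_def by blast
    obtain t m where yt: "y = (t, m)" by (cases y)
    have cr: "tlt le s u \<and> (is_pred T le s u \<or> (is_limit T le u \<and> u \<noteq> root \<and> s = ?nth n)
       \<or> (s \<in> Sf u \<and> n \<le> card (Sf s)))"
      using crossing[OF uT, of s n t m] y xs yt by simp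
    have "s \<in> C" using fstC[OF xS] xs by simp
    hence "\<not> is_pred T le s u" using pred_ok by blast
    thus "x \<in> F2 \<union> Sigma (Sf u) (\<lambda>s. {..card (Sf s)})"
      using cr xS xs unfolding F2_def by auto
  qed
  hence fF: "finite F" using fF2 fF3 finite_subset by blast
  have "\<exists>q\<in>Q. set q \<inter> F = {}"
  proof (rule ccontr)
    assume "\<not> (\<exists>q\<in>Q. set q \<inter> F = {})"
    hence ex: "\<forall>q\<in>Q. \<exists>x. x \<in> set q \<inter> F" by blast
    define g where "g q = (SOME x. x \<in> set q \<inter> F)" for q
    have g: "g q \<in> set q \<inter> F" if qQ: "q \<in> Q" for q
    proof -
      have "\<exists>x. x \<in> set q \<inter> F" using ex qQ by blast
      thus ?thesis unfolding g_def by (rule someI_ex)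
    qed
    have "inj_on g Q"
    proof (rule inj_onI)
      fix q q' assume qq: "q \<in> Q" "q' \<in> Q" "g q = g q'"
      show "q = q'"
      proof (rule ccontr)
        assume "q \<noteq> q'"
        hence "set q \<inter> set q' = {}" using Qdisj qq unfolding disjoint_paths_def by blast
        moreover have "g q \<in> set q" using g[OF qq(1)] by blast
        moreover have "g q \<in> set q'" using g[OF qq(2)] qq(3) by simp
        ultimately show False by blast
      qed
    qed
    moreover have "g ` Q \<subseteq> F" using g by blast
    hence "finite (g ` Q)" using fF finite_subset by blast
    ultimately have "finite Q" using finite_imageD by blast
    thus False using Qinf by blast
  qed
  then obtain q where qQ: "q \<in> Q" and qF: "set q \<inter> F = {}" by blast
  have qp: "is_path (T \<times> UNIV) adj q" using Qpath qQ by blast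
  hence qne: "q \<noteq> []" and qadj: "\<forall>i. Suc i < length q \<longrightarrow> adj (q ! i) (q ! Suc i)"
    unfolding is_path_def by auto
  have inR: "le u (fst v)" if vR: "v \<in> range R" for v
  proof -
    obtain k where "v = R k" using vR by blast
    thus ?thesis using cone[of k] by simp
  qed
  have qend: "(hd q \<in> range S \<and> last q \<in> range R) \<or> (hd q \<in> range R \<and> last q \<in> range S)"
    using Qend qQ by blast
  have "le u (fst (hd q)) \<noteq> le u (fst (last q))"
    using qend
  proof
    assume h: "hd q \<in> range S \<and> last q \<in> range R"
    show ?thesis using ncone[of "hd q"] inR[of "last q"] h by blast
  next
    assume h: "hd q \<in> range R \<and> last q \<in> range S"
    show ?thesis using ncone[of "last q"] inR[of "hd q"] h by blast
  qed
  then obtain i where i: "Suc i < length q" "le u (fst (q ! i)) \<noteq> le u (fst (q ! Suc i))"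
    using list_cross[OF qne, of "\<lambda>v. le u (fst v)"] by blast
  have aq: "q ! i \<in> set q" "q ! Suc i \<in> set q" using i(1) by auto
  have ab: "adj (q ! i) (q ! Suc i)" using qadj i(1) by blast
  obtain x y where xy: "x \<in> set q" "adj x y" "\<not> le u (fst x)" "le u (fst y)"
  proof (cases "le u (fst (q ! i))")
    case True
    have "\<not> le u (fst (q ! Suc i))" using True i(2) by blast
    show ?thesis by (rule that[OF aq(2) adj_sym[OF ab] \<open>\<not> le u (fst (q ! Suc i))\<close> True])
  next
    case False
    have "le u (fst (q ! Suc i))" using False i(2) by blast
    show ?thesis by (rule that[OF aq(1) ab False \<open>le u (fst (q ! Suc i))\<close>])
  qed
  have axy: "adj (fst x, snd x) (fst y, snd y)" using xy(2) by simp
  have "tlt le (fst x) u"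
    using crossing[OF uT axy] xy(3,4) by blast
  moreover have "fst x \<in> T" using adj_T(1)[OF axy] .
  ultimately have "fst x \<in> below T le u" unfolding below_def by blast
  hence xD: "fst x \<in> D" using bu by blast
  have xR: "x \<notin> range R" using RnD xD by blast
  have xS: "x \<notin> range S"
  proof
    assume "x \<in> range S"
    hence "x \<in> F" unfolding F_def using xy(2-4) by (intro CollectI conjI exI[of _ y])
    moreover have "x \<in> set q" by (rule xy(1))
    ultimately have "x \<in> set q \<inter> F" by (rule IntI[rotated])
    thus False using qF by simp
  qed
  have hl: "hd q \<in> range S \<union> range R" "last q \<in> range S \<union> range R" using qend by blast+
  have xSR: "x \<notin> range S \<union> range R" using xR xS by blast
  have hx: "x \<noteq> hd q" "x \<noteq> last q" using hl xSR by metis+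
  have "x \<in> inner_vertices q" by (rule inner_mem[OF xy(1) hx])
  thus ?thesis using qQ xD by blast
qed

end


lemma aleph1_uncountable: assumes "has_card_aleph1 A" shows "\<not> countable A"
proof
  assume "countable A"
  then obtain f :: "_ \<Rightarrow> nat" where "inj_on f A" unfolding countable_def by blast
  hence "|A| \<le>o |UNIV :: nat set|" using card_of_ordLeq[of A "UNIV :: nat set"] by blast
  moreover have "|UNIV :: nat set| <o cardSuc |UNIV :: nat set|"
    using cardSuc_greater card_of_Card_order by blast
  ultimately have "|A| <o cardSuc |UNIV :: nat set|" using ordLeq_ordLess_trans by blast
  moreover have "cardSuc |UNIV :: nat set| =o |A|"
    using assms ordIso_symmetric unfolding has_card_aleph1_def by blast
  ultimately have "cardSuc |UNIV :: nat set| <o cardSuc |UNIV :: nat set|"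
    using ordIso_ordLess_trans by blast
  thus False using ordLess_irreflexive by blast
qed

lemma inner_sub: "x \<in> inner_vertices q \<Longrightarrow> x \<in> set q"
  unfolding inner_vertices_def by (cases q) (auto dest: in_set_butlastD)

lemma countable_reach:
  assumes nb: "\<And>S. S \<in> X \<Longrightarrow> countable {R. (S, R) \<in> H}" and Hs: "H \<subseteq> X \<times> X" and R0: "R0 \<in> X"
  shows "countable {y. (R0, y) \<in> H\<^sup>*}"
proof -
  have lev: "countable {y. (R0, y) \<in> H ^^ n}" for n
  proof (induction n)
    case 0 thus ?case by simp
  next
    case (Suc n)
    have "{y. (R0, y) \<in> H ^^ Suc n} \<subseteq> (\<Union>z\<in>{y. (R0, y) \<in> H ^^ n} \<inter> X. {R. (z, R) \<in> H})"
    proof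
      fix y assume "y \<in> {y. (R0, y) \<in> H ^^ Suc n}"
      then obtain z where z: "(R0, z) \<in> H ^^ n" "(z, y) \<in> H" by auto
      have "z \<in> X" using z(2) Hs by blast
      thus "y \<in> (\<Union>z\<in>{y. (R0, y) \<in> H ^^ n} \<inter> X. {R. (z, R) \<in> H})" using z by blast
    qed
    moreover have "countable (\<Union>z\<in>{y. (R0, y) \<in> H ^^ n} \<inter> X. {R. (z, R) \<in> H})"
      using Suc.IH nb by (intro countable_UN) (auto intro: countable_subset)
    ultimately show ?case using countable_subset by blast
  qed
  have "{y. (R0, y) \<in> H\<^sup>*} = (\<Union>n. {y. (R0, y) \<in> H ^^ n})" using rtrancl_power by blast
  thus ?thesis using lev by simp
qed

context atree begin

lemma countable_nbrs:
  assumes disj: "disjoint_rays (T \<times> UNIV) adj \<R>" and RG: "is_ray_graph (T \<times> UNIV) adj \<R> H" and S: "S \<in> \<R>"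
  shows "countable {R. (S, R) \<in> H}"
proof -
  have rays: "is_ray (T \<times> UNIV) adj R" if "R \<in> \<R>" for R using disj that unfolding disjoint_rays_def by blast
  have dj: "range R \<inter> range R' = {}" if "R \<in> \<R>" "R' \<in> \<R>" "R \<noteq> R'" for R R'
    using disj that unfolding disjoint_rays_def by blast
  have RG': "H \<subseteq> \<R> \<times> \<R> \<and> sym H \<and> (\<forall>R. (R, R) \<notin> H) \<and>
     (\<exists>P. (\<forall>p\<in>P. is_path (T \<times> UNIV) adj p \<and> set p \<inter> (\<Union>R\<in>\<R>. range R) = {hd p, last p}) \<and>
          independent_paths P \<and>
          (\<forall>(R, S)\<in>H. \<exists>Q\<subseteq>P. infinite Q \<and> disjoint_paths Q \<and>
              (\<forall>q\<in>Q. (hd q \<in> range R \<and> last q \<in> range S) \<or> (hd q \<in> range S \<and> last q \<in> range R))))"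
    using RG unfolding is_ray_graph_def .
  have Hsub: "H \<subseteq> \<R> \<times> \<R>" using RG' by (elim conjE)
  have exP: "\<exists>P. (\<forall>p\<in>P. is_path (T \<times> UNIV) adj p \<and> set p \<inter> (\<Union>R\<in>\<R>. range R) = {hd p, last p}) \<and>
          independent_paths P \<and>
          (\<forall>(R, S)\<in>H. \<exists>Q\<subseteq>P. infinite Q \<and> disjoint_paths Q \<and>
              (\<forall>q\<in>Q. (hd q \<in> range R \<and> last q \<in> range S) \<or> (hd q \<in> range S \<and> last q \<in> range R)))"
    using RG' by (elim conjE)
  then obtain P where Pp0: "\<forall>p\<in>P. is_path (T \<times> UNIV) adj p \<and> set p \<inter> (\<Union>R\<in>\<R>. range R) = {hd p, last p}"
    and ind: "independent_paths P"
    and HQ: "\<forall>(R, S)\<in>H. \<exists>Q\<subseteq>P. infinite Q \<and> disjoint_paths Q \<and>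
              (\<forall>q\<in>Q. (hd q \<in> range R \<and> last q \<in> range S) \<or> (hd q \<in> range S \<and> last q \<in> range R))"
    by (elim exE conjE)
  have Pp: "\<forall>p\<in>P. is_path (T \<times> UNIV) adj p" using Pp0 by blast
  define D where "D = {u \<in> T. below T le u \<subseteq> dcl (fst ` range S)}"
  have Sray: "is_ray (T \<times> UNIV) adj S" using rays S .
  have "fst ` range S \<subseteq> T" using Sray unfolding is_ray_def by auto
  hence cD: "countable D" unfolding D_def using dcl_countable tops_countable by auto
  define ends where "ends q R \<longleftrightarrow> (hd q \<in> range S \<and> last q \<in> range R) \<or> (hd q \<in> range R \<and> last q \<in> range S)" for q and R :: "nat \<Rightarrow> 'a \<times> nat"
  define RD where "RD = {R \<in> \<R>. \<exists>v\<in>range R. fst v \<in> D}"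
  define pick where "pick R = (SOME v. v \<in> range R \<and> fst v \<in> D)" for R :: "nat \<Rightarrow> 'a \<times> nat"
  have pick: "pick R \<in> range R \<and> fst (pick R) \<in> D" if "R \<in> RD" for R
  proof -
    have "\<exists>v. v \<in> range R \<and> fst v \<in> D" using that unfolding RD_def by blast
    thus ?thesis unfolding pick_def by (rule someI_ex)
  qed
  have "inj_on pick RD"
  proof (rule inj_onI)
    fix R R' assume a: "R \<in> RD" "R' \<in> RD" "pick R = pick R'"
    show "R = R'"
    proof (rule ccontr)
      assume "R \<noteq> R'"
      hence "range R \<inter> range R' = {}" using dj a(1,2) unfolding RD_def by blast
      moreover have "pick R \<in> range R" using pick[OF a(1)] by blast
      moreover have "pick R \<in> range R'" using pick[OF a(2)] a(3) by simp
      ultimately show False by blast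
    qed
  qed
  moreover have "pick ` RD \<subseteq> D \<times> UNIV"
  proof
    fix v assume "v \<in> pick ` RD"
    then obtain R where "R \<in> RD" "v = pick R" by blast
    hence "fst v \<in> D" using pick by blast
    thus "v \<in> D \<times> UNIV" by (cases v) simp
  qed
  moreover have "countable (D \<times> (UNIV :: nat set))" using cD by simp
  ultimately have cRD: "countable RD" using countable_subset countable_image_inj_on by blast
  have SRD: "S \<in> RD"
  proof -
    have "fst (S 0) \<in> fst ` range S" by simp
    moreover have "S 0 \<in> T \<times> UNIV" using Sray unfolding is_ray_def by blast
    ultimately have "below T le (fst (S 0)) \<subseteq> dcl (fst ` range S)" unfolding below_def dcl_def tlt_def
      by (auto simp: mem_Times_iff)
    hence "fst (S 0) \<in> D" unfolding D_def using \<open>S 0 \<in> T \<times> UNIV\<close> by (auto simp: mem_Times_iff)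
    thus ?thesis unfolding RD_def using S by blast
  qed
  let ?N = "{R. (S, R) \<in> H} - RD"
  have wit: "\<exists>q\<in>P. \<exists>x. x \<in> inner_vertices q \<and> fst x \<in> D \<and> ends q R" if RN: "R \<in> ?N" for R
  proof -
    have SR: "(S, R) \<in> H" and nRD: "R \<notin> RD" using RN by auto
    have Rin: "R \<in> \<R>" using SR Hsub by blast
    have "\<exists>Q\<subseteq>P. infinite Q \<and> disjoint_paths Q \<and>
      (\<forall>q\<in>Q. (hd q \<in> range S \<and> last q \<in> range R) \<or> (hd q \<in> range R \<and> last q \<in> range S))"
      using bspec[OF HQ SR] by (simp only: prod.case)
    then obtain Q where Q: "Q \<subseteq> P" "infinite Q" "disjoint_paths Q"
      "\<forall>q\<in>Q. (hd q \<in> range S \<and> last q \<in> range R) \<or> (hd q \<in> range R \<and> last q \<in> range S)"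
      by (elim exE conjE)
    have RnD: "\<forall>v\<in>range R. fst v \<notin> D" using nRD Rin unfolding RD_def by blast
    have Qp: "\<forall>q\<in>Q. is_path (T \<times> UNIV) adj q" using Q(1) Pp by blast
    obtain q x where qx: "q \<in> Q" "x \<in> inner_vertices q" "fst x \<in> D"
      using witness[OF rays[OF Rin] Sray D_def RnD Q(2) Q(3) Qp Q(4)] by blast
    thus ?thesis using Q(1,4) unfolding ends_def by blast
  qed
  define phi where "phi R = (SOME x. \<exists>q\<in>P. x \<in> inner_vertices q \<and> fst x \<in> D \<and> ends q R)" for R
  have phi: "\<exists>q\<in>P. phi R \<in> inner_vertices q \<and> fst (phi R) \<in> D \<and> ends q R" if "R \<in> ?N" for R
  proof -
    have "\<exists>x. \<exists>q\<in>P. x \<in> inner_vertices q \<and> fst x \<in> D \<and> ends q R" using wit[OF that] by blast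
    thus ?thesis unfolding phi_def by (rule someI_ex)
  qed
  have "inj_on phi ?N"
  proof (rule inj_onI)
    fix R R' assume a: "R \<in> ?N" "R' \<in> ?N" "phi R = phi R'"
    obtain q where q: "q \<in> P" "phi R \<in> inner_vertices q" "ends q R" using phi[OF a(1)] by blast
    obtain q' where q': "q' \<in> P" "phi R \<in> inner_vertices q'" "ends q' R'" using phi[OF a(2)] a(3) by auto
    have "q = q'"
    proof (rule ccontr)
      assume "q \<noteq> q'"
      hence "inner_vertices q \<inter> set q' = {}" using ind q(1) q'(1) unfolding independent_paths_def by blast
      moreover have "phi R \<in> set q'" using inner_sub[OF q'(2)] .
      ultimately show False using q(2) by blast
    qed
    hence e1: "ends q R" and e2: "ends q R'" using q q' by auto
    have RR: "R \<in> \<R>" "R' \<in> \<R>" using a(1,2) Hsub by auto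
    have nS: "R \<noteq> S" "R' \<noteq> S" using a(1,2) SRD by auto
    have d1: "range R \<inter> range S = {}" using dj[OF RR(1) S nS(1)] .
    have d2: "range R' \<inter> range S = {}" using dj[OF RR(2) S nS(2)] .
    show "R = R'"
    proof (rule ccontr)
      assume "R \<noteq> R'"
      hence d3: "range R \<inter> range R' = {}" using dj RR by blast
      show False
      proof (cases "hd q \<in> range S")
        case True
        hence "last q \<in> range R" "last q \<in> range R'" using e1 e2 d1 d2 unfolding ends_def by blast+
        thus False using d3 by blast
      next
        case False
        hence "hd q \<in> range R" "hd q \<in> range R'" using e1 e2 unfolding ends_def by blast+
        thus False using d3 by blast
      qed
    qed
  qed
  moreover have "phi ` ?N \<subseteq> D \<times> UNIV"
  proof
    fix v assume "v \<in> phi ` ?N"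
    then obtain R where "R \<in> ?N" "v = phi R" by blast
    hence "fst v \<in> D" using phi by blast
    thus "v \<in> D \<times> UNIV" by (cases v) simp
  qed
  moreover have "countable (D \<times> (UNIV :: nat set))" using cD by simp
  ultimately have "countable ?N" using countable_subset countable_image_inj_on by blast
  hence "countable (RD \<union> ?N)" by (rule countable_Un[OF cRD])
  moreover have "{R. (S, R) \<in> H} \<subseteq> RD \<union> ?N" by blast
  ultimately show ?thesis using countable_subset by blast
qed

lemma no_crg:
  assumes disj: "disjoint_rays (T \<times> UNIV) adj \<R>" and card: "has_card_aleph1 \<R>"
  shows "\<not> admits_connected_ray_graph (T \<times> UNIV) adj \<R>"
proof
  assume "admits_connected_ray_graph (T \<times> UNIV) adj \<R>"
  then obtain H where RG: "is_ray_graph (T \<times> UNIV) adj \<R> H" and con: "connected_on \<R> H"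
    unfolding admits_connected_ray_graph_def by blast
  obtain R0 where R0: "R0 \<in> \<R>" using con unfolding connected_on_def by blast
  have Hs: "H \<subseteq> \<R> \<times> \<R>" using RG unfolding is_ray_graph_def by blast
  have "countable {y. (R0, y) \<in> H\<^sup>*}"
    using countable_reach[OF countable_nbrs[OF disj RG] Hs R0] .
  moreover have "\<R> \<subseteq> {y. (R0, y) \<in> H\<^sup>*}" using con R0 unfolding connected_on_def by blast
  ultimately have "countable \<R>" using countable_subset by blast
  thus False using aleph1_uncountable[OF card] by blast
qed

end

context atree begin

lemma vpath:
  "t \<in> T \<longrightarrow> (\<exists>qs. qs \<noteq> [] \<and> hd qs = root \<and> last qs = t \<and> distinct qs \<and> set qs \<subseteq> T \<and>
     (\<forall>x\<in>set qs. le x t) \<and> (\<forall>i. Suc i < length qs \<longrightarrow> adj (qs ! i, n) (qs ! Suc i, n)))"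
proof (induct t rule: wf_induct[OF wf_lt])
  case (1 t)
  show ?case
  proof
    assume tT: "t \<in> T"
    show "\<exists>qs. qs \<noteq> [] \<and> hd qs = root \<and> last qs = t \<and> distinct qs \<and> set qs \<subseteq> T \<and>
     (\<forall>x\<in>set qs. le x t) \<and> (\<forall>i. Suc i < length qs \<longrightarrow> adj (qs ! i, n) (qs ! Suc i, n))"
    proof (cases "t = root")
      case True
      show ?thesis
        by (rule exI[of _ "[root]"]) (simp add: True root(1) refl[OF root(1)])
    next
      case False
      obtain t' where t': "t' \<in> T" "tlt le t' t" "adj (t', n) (t, n)"
      proof (cases "\<exists>p. is_pred T le p t")
        case True
        then obtain p where p: "is_pred T le p t" by blast
        have "inflation_base T le G (t, n) (p, n)" unfolding inflation_base_def using p by blast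
        hence "adj (p, n) (t, n)" unfolding ray_inflation_def by blast
        thus ?thesis using that is_pred_D[OF p] by blast
      next
        case F2: False
        hence lim: "is_limit T le t" using tT unfolding is_limit_def by blast
        have nr: "\<not> is_root T le t" using False is_root_iff by blast
        have "inflation_base T le G (t, n) (nth_down_nbr T le G t n, n)"
          unfolding inflation_base_def using lim nr by blast
        hence "adj (nth_down_nbr T le G t n, n) (t, n)" unfolding ray_inflation_def by blast
        thus ?thesis using that limit_step[OF lim False] by blast
      qed
      have "(t', t) \<in> {(s,t). s \<in> T \<and> t \<in> T \<and> tlt le s t}" using t' tT by blast
      hence "t' \<in> T \<longrightarrow> (\<exists>qs. qs \<noteq> [] \<and> hd qs = root \<and> last qs = t' \<and> distinct qs \<and> set qs \<subseteq> T \<and>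
     (\<forall>x\<in>set qs. le x t') \<and> (\<forall>i. Suc i < length qs \<longrightarrow> adj (qs ! i, n) (qs ! Suc i, n)))"
        using 1 by blast
      then obtain qs where qs: "qs \<noteq> []" "hd qs = root" "last qs = t'" "distinct qs" "set qs \<subseteq> T"
        "\<forall>x\<in>set qs. le x t'" "\<forall>i. Suc i < length qs \<longrightarrow> adj (qs ! i, n) (qs ! Suc i, n)"
        using t'(1) by blast
      have tn: "t \<notin> set qs"
      proof
        assume "t \<in> set qs"
        hence "le t t'" using qs(6) by blast
        thus False using tlt_not_le[OF t'(1) tT t'(2)] by blast
      qed
      let ?qs = "qs @ [t]"
      have "\<forall>i. Suc i < length ?qs \<longrightarrow> adj (?qs ! i, n) (?qs ! Suc i, n)"
      proof (intro allI impI)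
        fix i assume i: "Suc i < length ?qs"
        show "adj (?qs ! i, n) (?qs ! Suc i, n)"
        proof (cases "Suc i < length qs")
          case True
          thus ?thesis using qs(7) by (simp add: nth_append)
        next
          case False
          hence si: "Suc i = length qs" using i by simp
          have "i = length qs - 1" using si by simp
          hence "?qs ! i = last qs" using qs(1) si by (simp add: nth_append last_conv_nth)
          moreover have "?qs ! Suc i = t" using si by (simp add: nth_append)
          ultimately show ?thesis using qs(3) t'(3) by simp
        qed
      qed
      moreover have "\<forall>x\<in>set ?qs. le x t"
      proof
        fix x assume "x \<in> set ?qs"
        hence "x \<in> set qs \<or> x = t" by auto
        thus "le x t"
        proof
          assume "x \<in> set qs"
          hence "le x t'" "x \<in> T" using qs(5,6) by auto
          thus ?thesis using trans[OF _ t'(1) tT] t'(2) unfolding tlt_def by blast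
        qed (simp add: refl[OF tT])
      qed
      moreover have "?qs \<noteq> []" "hd ?qs = root" "last ?qs = t" "distinct ?qs" "set ?qs \<subseteq> T"
        using qs tn tT by auto
      ultimately show ?thesis by blast
    qed
  qed
qed

abbreviation vr :: "'a \<Rightarrow> nat \<Rightarrow> 'a \<times> nat" where "vr t \<equiv> (\<lambda>n. (t, n))"

lemma vr_ray: assumes "t \<in> T" shows "is_ray (T \<times> UNIV) adj (vr t)"
  unfolding is_ray_def
proof (intro conjI allI)
  show "inj (vr t)" unfolding inj_def by simp
  show "range (vr t) \<subseteq> T \<times> UNIV" using assms by auto
  fix n
  have "inflation_base T le G (t, n) (t, Suc n)" unfolding inflation_base_def using assms by blast
  thus "adj (vr t n) (vr t (Suc n))" unfolding ray_inflation_def by simp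
qed

lemma vr_equiv: assumes tT: "t \<in> T" shows "rays_equiv (T \<times> UNIV) adj (vr root) (vr t)"
proof -
  have ex: "\<forall>n. \<exists>qs. qs \<noteq> [] \<and> hd qs = root \<and> last qs = t \<and> distinct qs \<and> set qs \<subseteq> T \<and>
     (\<forall>x\<in>set qs. le x t) \<and> (\<forall>i. Suc i < length qs \<longrightarrow> adj (qs ! i, n) (qs ! Suc i, n))"
    using vpath tT by blast
  obtain qf where qf: "\<And>n. qf n \<noteq> [] \<and> hd (qf n) = root \<and> last (qf n) = t \<and> distinct (qf n) \<and> set (qf n) \<subseteq> T \<and>
     (\<forall>x\<in>set (qf n). le x t) \<and> (\<forall>i. Suc i < length (qf n) \<longrightarrow> adj (qf n ! i, n) (qf n ! Suc i, n))"
    using choice[OF ex] by blast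
  define pth where "pth n = map (\<lambda>s. (s, n)) (qf n)" for n
  define P where "P = range pth"
  have sp: "set (pth n) = (\<lambda>s. (s, n)) ` set (qf n)" for n unfolding pth_def by simp
  have hdp: "hd (pth n) = (root, n)" for n using qf[of n] unfolding pth_def by (simp add: hd_map)
  have lastp: "last (pth n) = (t, n)" for n using qf[of n] unfolding pth_def by (simp add: last_map)
  have "inj pth"
  proof (rule injI)
    fix n m assume "pth n = pth m"
    hence "hd (pth n) = hd (pth m)" by simp
    thus "n = m" using hdp by simp
  qed
  hence Pinf: "infinite P" unfolding P_def using finite_imageD[of pth UNIV] by auto
  have Pdisj: "disjoint_paths P" unfolding disjoint_paths_def
  proof (intro ballI impI)
    fix p q assume pq: "p \<in> P" "q \<in> P" "p \<noteq> q"
    obtain n m where nm: "p = pth n" "q = pth m" using pq(1,2) unfolding P_def by blast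
    hence "n \<noteq> m" using pq(3) by blast
    thus "set p \<inter> set q = {}" using nm sp by auto
  qed
  have PAB: "AB_path (T \<times> UNIV) adj (range (vr root)) (range (vr t)) p" if pP: "p \<in> P" for p
  proof -
    obtain n where pn: "p = pth n" using pP unfolding P_def by blast
    have q: "qf n \<noteq> []" "hd (qf n) = root" "last (qf n) = t" "distinct (qf n)" "set (qf n) \<subseteq> T"
      "\<forall>i. Suc i < length (qf n) \<longrightarrow> adj (qf n ! i, n) (qf n ! Suc i, n)" using qf[of n] by blast+
    have rin: "root \<in> set (qf n)" using q(1,2) hd_in_set by metis
    have tin: "t \<in> set (qf n)" using q(1,3) last_in_set by metis
    have path: "is_path (T \<times> UNIV) adj p" unfolding is_path_def pn
    proof (intro conjI allI impI)
      show "pth n \<noteq> []" using q(1) unfolding pth_def by simp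
      show "distinct (pth n)" using q(4) unfolding pth_def by (simp add: distinct_map inj_on_def)
      show "set (pth n) \<subseteq> T \<times> UNIV" using q(5) sp by auto
      fix i assume "Suc i < length (pth n)"
      thus "adj (pth n ! i) (pth n ! Suc i)" using q(6) unfolding pth_def by simp
    qed
    have "set p \<inter> range (vr root) = {(root, n)}" using rin unfolding pn sp by auto
    moreover have "set p \<inter> range (vr t) = {(t, n)}" using tin unfolding pn sp by auto
    ultimately show ?thesis unfolding AB_path_def using path hdp lastp pn by simp
  qed
  show ?thesis unfolding rays_equiv_def
    using vr_ray[OF root(1)] vr_ray[OF tT] Pinf Pdisj PAB by blast
qed

end

context atree begin

lemma T_aleph1: "has_card_aleph1 T" using aronD by (elim conjE)

lemma main:
  "\<exists>\<epsilon>. is_end (T \<times> UNIV) (ray_inflation T le G) \<epsilon> \<and>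
           end_degree_aleph1 (T \<times> UNIV) (ray_inflation T le G) \<epsilon> \<and>
           \<not> (\<exists>\<R>. \<R> \<subseteq> \<epsilon> \<and> disjoint_rays (T \<times> UNIV) (ray_inflation T le G) \<R> \<and>
                  has_card_aleph1 \<R> \<and>
                  admits_connected_ray_graph (T \<times> UNIV) (ray_inflation T le G) \<R>)"
proof -
  define \<epsilon> where "\<epsilon> = {S. rays_equiv (T \<times> UNIV) adj (vr root) S}"
  have e1: "is_end (T \<times> UNIV) adj \<epsilon>" unfolding is_end_def \<epsilon>_def using vr_ray[OF root(1)] by blast
  define R0 where "R0 = vr ` T"
  have R0e: "R0 \<subseteq> \<epsilon>" unfolding R0_def \<epsilon>_def using vr_equiv by blast
  have R0d: "disjoint_rays (T \<times> UNIV) adj R0" unfolding disjoint_rays_def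
  proof (intro conjI ballI impI)
    fix R assume "R \<in> R0"
    then obtain t where "t \<in> T" "R = vr t" unfolding R0_def by blast
    thus "is_ray (T \<times> UNIV) adj R" using vr_ray by simp
  next
    fix R S assume a: "R \<in> R0" "S \<in> R0" "R \<noteq> S"
    then obtain t s where ts: "R = vr t" "S = vr s" unfolding R0_def by blast
    hence "t \<noteq> s" using a(3) by blast
    thus "range R \<inter> range S = {}" using ts by auto
  qed
  have "bij_betw vr T R0" unfolding R0_def bij_betw_def inj_on_def by (auto dest: fun_cong[of _ _ 0])
  hence "|T| =o |R0|" using card_of_ordIso by blast
  hence "|R0| =o cardSuc |UNIV :: nat set|"
    using ordIso_transitive[OF ordIso_symmetric] T_aleph1 unfolding has_card_aleph1_def by blast
  hence R0c: "has_card_aleph1 R0" unfolding has_card_aleph1_def .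
  have Tinf: "\<not> finite T" using aleph1_uncountable[OF T_aleph1] countable_finite by blast
  have TT: "|T \<times> (UNIV :: nat set)| =o |T|"
    using card_of_Times_infinite_simps(1)[OF Tinf _ infinite_iff_card_of_nat[THEN iffD1, OF Tinf]] by simp
  have ub: "card_le_aleph1 \<R>" if a: "\<R> \<subseteq> \<epsilon>" "disjoint_rays (T \<times> UNIV) adj \<R>" for \<R>
  proof -
    have rays: "is_ray (T \<times> UNIV) adj R" if "R \<in> \<R>" for R using a(2) that unfolding disjoint_rays_def by blast
    have dj: "range R \<inter> range R' = {}" if "R \<in> \<R>" "R' \<in> \<R>" "R \<noteq> R'" for R R'
      using a(2) that unfolding disjoint_rays_def by blast
    have "inj_on (\<lambda>R. R 0) \<R>"
    proof (rule inj_onI)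
      fix R R' assume b: "R \<in> \<R>" "R' \<in> \<R>" "R 0 = R' 0"
      show "R = R'"
      proof (rule ccontr)
        assume "R \<noteq> R'"
        hence "range R \<inter> range R' = {}" using dj b by blast
        moreover have "R 0 \<in> range R" by simp
        moreover have "R 0 \<in> range R'" unfolding b(3) by simp
        ultimately show False by blast
      qed
    qed
    moreover have "(\<lambda>R. R 0) ` \<R> \<subseteq> T \<times> UNIV"
    proof
      fix v assume "v \<in> (\<lambda>R. R 0) ` \<R>"
      then obtain R where "R \<in> \<R>" "v = R 0" by blast
      thus "v \<in> T \<times> UNIV" using rays[OF \<open>R \<in> \<R>\<close>] unfolding is_ray_def by blast
    qed
    ultimately have "|\<R>| \<le>o |T \<times> (UNIV :: nat set)|" using card_of_ordLeq by blast
    hence "|\<R>| \<le>o |T|" using TT ordLeq_ordIso_trans by blast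
    hence "|\<R>| \<le>o cardSuc |UNIV :: nat set|" using T_aleph1 ordLeq_ordIso_trans
      unfolding has_card_aleph1_def by blast
    thus ?thesis unfolding card_le_aleph1_def .
  qed
  have e2: "end_degree_aleph1 (T \<times> UNIV) adj \<epsilon>" unfolding end_degree_aleph1_def
    using R0e R0d R0c ub by blast
  have e3: "\<not> (\<exists>\<R>. \<R> \<subseteq> \<epsilon> \<and> disjoint_rays (T \<times> UNIV) adj \<R> \<and> has_card_aleph1 \<R> \<and>
                  admits_connected_ray_graph (T \<times> UNIV) adj \<R>)"
    using no_crg by blast
  show ?thesis using e1 e2 e3 by blast
qed

end

theorem theorem6p6:
  fixes T :: "'a set" and le :: "'a \<Rightarrow> 'a \<Rightarrow> bool" and G :: "'a \<Rightarrow> 'a \<Rightarrow> bool"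
  assumes "aronszajn_tree T le"
    and "sparse_T_graph T le G"
    and "\<forall>t\<in>T. \<exists>S. finite S \<and> S \<subseteq> below T le t \<and>
           (\<forall>t'\<in>T. tlt le t t' \<longrightarrow> down_nbrs T le G t' \<inter> below T le t \<subseteq> S)"
  shows "\<exists>\<epsilon>. is_end (T \<times> UNIV) (ray_inflation T le G) \<epsilon> \<and>
           end_degree_aleph1 (T \<times> UNIV) (ray_inflation T le G) \<epsilon> \<and>
           \<not> (\<exists>\<R>. \<R> \<subseteq> \<epsilon> \<and> disjoint_rays (T \<times> UNIV) (ray_inflation T le G) \<R> \<and>
                  has_card_aleph1 \<R> \<and>
                  admits_connected_ray_graph (T \<times> UNIV) (ray_inflation T le G) \<R>)"
proof -
  interpret atree T le G using assms by unfold_locales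
  show ?thesis by (rule main)
qed

end
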